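(* Let $R$ be a finite chain ring, $r\ge1$, $\rho\ge2$, and let $A=\bigcup_{i=1}^lA_i\subseteq R$ be a well-conditioned set partitioned into $l$ pairwise disjoint blocks with $|A_i|=r+\rho-1$, so $n=|A|=l(r+\rho-1)$. Let $g\in R[x]$ be a polynomial of degree $r+\rho-1$ with unit leading coefficient which is constant on each $A_i$. Let $r\mid K$ with $t=K/r\le l$. For $a=(a_{i,j})_{0\le i\le r-1,\,0\le j\le t-1}\in R^K$ let $f_a(x)=\sum_{i=0}^{r-1}\sum_{j=0}^{t-1}a_{i,j}g(x)^jx^i$ and $\mathcal C=\{(f_a(\alpha))_{\alpha\in A}:a\in R^K\}$. Then $\mathcal C$ is a free $R$-linear code of rank $K$, for each $i$ the punctured code $\mathcal C_{A_i}$ has minimum distance at least $\rho$ (so $\mathcal C$ has $(r,\rho)$-locality with respect to the partition $\{A_i\}$; any erased coordinate in $A_i$ is recoverable from any $r$ other coordinates in $A_i$), and $$d\ge n-K+1-\left(\frac{K}{r}-1\right)(\rho-1).$$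
   Context: A finite chain ring is a finite commutative local ring whose ideals are totally ordered by inclusion; $N(R)$ is its unit group. A subset $T\subseteq N(R)$ is subtractive if $a-b\in N(R)$ for all distinct $a,b\in T$. A set $\{a_1,\dots,a_n\}\subseteq R$ is well-conditioned if either it is a subtractive subset of $N(R)$, or for some $i$ the set without $a_i$ is a subtractive subset of $N(R)$ and $a_i$ is a zero divisor (or $0$). A code has $(r,\rho)$-locality if its coordinates are partitioned into sets $B_i$ with $|B_i|\le r+\rho-1$ and each punctured code $C_{B_i}$ has minimum distance at least $\rho$. *)

theory Defs
  imports "HOL-Computational_Algebra.Polynomial"
begin

definition is_ideal :: "'a::comm_ring_1 set \<Rightarrow> bool" where
  "is_ideal I \<longleftrightarrow> 0 \<in> I \<and> (\<forall>x\<in>I. \<forall>y\<in>I. x + y \<in> I) \<and> (\<forall>c x. x \<in> I \<longrightarrow> c * x \<in> I)"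

definition is_maximal_ideal :: "'a::comm_ring_1 set \<Rightarrow> bool" where
  "is_maximal_ideal I \<longleftrightarrow> is_ideal I \<and> I \<noteq> UNIV \<and>
     (\<forall>J. is_ideal J \<longrightarrow> I \<subseteq> J \<longrightarrow> J = I \<or> J = UNIV)"

definition local_ring :: "'a::comm_ring_1 itself \<Rightarrow> bool" where
  "local_ring _ \<longleftrightarrow> (\<exists>!I::'a set. is_maximal_ideal I)"

definition chain_ring :: "'a::comm_ring_1 itself \<Rightarrow> bool" where
  "chain_ring T \<longleftrightarrow> finite (UNIV::'a set) \<and> local_ring T \<and>
     (\<forall>I J::'a set. is_ideal I \<longrightarrow> is_ideal J \<longrightarrow> I \<subseteq> J \<or> J \<subseteq> I)"

definition units :: "'a::comm_ring_1 set" where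
  "units = {x. x dvd 1}"

definition subtractive :: "'a::comm_ring_1 set \<Rightarrow> bool" where
  "subtractive T \<longleftrightarrow> T \<subseteq> units \<and> (\<forall>a\<in>T. \<forall>b\<in>T. a \<noteq> b \<longrightarrow> a - b \<in> units)"

definition zero_divisor_or_zero :: "'a::comm_ring_1 \<Rightarrow> bool" where
  "zero_divisor_or_zero a \<longleftrightarrow> a = 0 \<or> (\<exists>b. b \<noteq> 0 \<and> a * b = 0)"

definition well_conditioned :: "'a::comm_ring_1 set \<Rightarrow> bool" where
  "well_conditioned A \<longleftrightarrow> subtractive A \<or>
     (\<exists>a\<in>A. subtractive (A - {a}) \<and> zero_divisor_or_zero a)"

text \<open>Codewords with coordinates indexed by the evaluation set: functions 'a => 'a,
  only the values on the coordinate set matter.\<close>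
definition hdist_on :: "'b set \<Rightarrow> ('b \<Rightarrow> 'a) \<Rightarrow> ('b \<Rightarrow> 'a) \<Rightarrow> nat" where
  "hdist_on S c c' = card {x\<in>S. c x \<noteq> c' x}"

definition min_dist_ge :: "('b \<Rightarrow> 'a) set \<Rightarrow> 'b set \<Rightarrow> int \<Rightarrow> bool" where
  "min_dist_ge C S d \<longleftrightarrow> (\<forall>c\<in>C. \<forall>c'\<in>C. (\<exists>x\<in>S. c x \<noteq> c' x) \<longrightarrow> int (hdist_on S c c') \<ge> d)"

definition linear_code :: "'b set \<Rightarrow> ('b \<Rightarrow> 'a::comm_ring_1) set \<Rightarrow> bool" where
  "linear_code S C \<longleftrightarrow> (\<forall>c\<in>C. \<forall>x. x \<notin> S \<longrightarrow> c x = 0) \<and> (\<lambda>_. 0) \<in> C \<and>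
     (\<forall>c\<in>C. \<forall>c'\<in>C. (\<lambda>x. c x + c' x) \<in> C) \<and> (\<forall>k. \<forall>c\<in>C. (\<lambda>x. k * c x) \<in> C)"

definition free_rank :: "('b \<Rightarrow> 'a::comm_ring_1) set \<Rightarrow> nat \<Rightarrow> bool" where
  "free_rank C K \<longleftrightarrow> (\<exists>b :: nat \<Rightarrow> 'b \<Rightarrow> 'a. (\<forall>i<K. b i \<in> C) \<and>
     (\<forall>c\<in>C. \<exists>!cf::nat \<Rightarrow> 'a. (\<forall>i\<ge>K. cf i = 0) \<and> c = (\<lambda>x. \<Sum>i<K. cf i * b i x)))"

definition has_locality :: "('b \<Rightarrow> 'a) set \<Rightarrow> 'b set \<Rightarrow> nat \<Rightarrow> nat \<Rightarrow> nat \<Rightarrow> (nat \<Rightarrow> 'b set) \<Rightarrow> bool" where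
  "has_locality C S r \<rho> l B \<longleftrightarrow> S = (\<Union>i<l. B i) \<and>
     (\<forall>i<l. \<forall>j<l. i \<noteq> j \<longrightarrow> B i \<inter> B j = {}) \<and>
     (\<forall>i<l. card (B i) \<le> r + \<rho> - 1 \<and> min_dist_ge C (B i) (int \<rho>))"

definition f_msg :: "nat \<Rightarrow> nat \<Rightarrow> 'a::comm_ring_1 poly \<Rightarrow> (nat \<Rightarrow> nat \<Rightarrow> 'a) \<Rightarrow> 'a \<Rightarrow> 'a" where
  "f_msg r t g a x = (\<Sum>i<r. \<Sum>j<t. a i j * (poly g x) ^ j * x ^ i)"

definition code :: "'a set \<Rightarrow> nat \<Rightarrow> nat \<Rightarrow> 'a::comm_ring_1 poly \<Rightarrow> ('a \<Rightarrow> 'a) set" where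
  "code A r t g = {(\<lambda>x. if x \<in> A then f_msg r t g a x else 0) | a. True}"

end

theory Submission
  imports Defs
begin

definition pw :: "'a::comm_ring_1 set \<Rightarrow> bool" where
  "pw S \<longleftrightarrow> (\<forall>x\<in>S. \<forall>y\<in>S. x \<noteq> y \<longrightarrow> x - y \<in> units)"

lemma unit_mult_zero:
  fixes u v :: "'a::comm_ring_1"
  assumes "u \<in> units" "u * v = 0" shows "v = 0"
proof -
  from assms(1) obtain w where w: "1 = u * w" unfolding units_def by (auto elim: dvdE)
  have "v = w * (u * v)" by (metis w mult.commute mult.left_neutral mult.assoc)
  with assms(2) show ?thesis by simp
qed

lemma degree_mult_unit_lead:
  fixes g h :: "'a::comm_ring_1 poly"
  assumes "lead_coeff g \<in> units" "h \<noteq> 0"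
  shows "degree (g * h) = degree g + degree h"
proof (rule antisym)
  show "degree (g*h) \<le> degree g + degree h" by (rule degree_mult_le)
  have "coeff (g*h) (degree g + degree h) = lead_coeff g * lead_coeff h"
    by (rule coeff_mult_degree_sum)
  moreover have "lead_coeff g * lead_coeff h \<noteq> 0"
    using unit_mult_zero[OF assms(1), of "lead_coeff h"] assms(2) by auto
  ultimately show "degree g + degree h \<le> degree (g*h)" by (metis le_degree)
qed

lemma root_bound:
  fixes p :: "'a::comm_ring_1 poly"
  assumes "finite S" "pw S" "p \<noteq> 0"
  shows "card {x\<in>S. poly p x = 0} \<le> degree p"
  using assms(3)
proof (induction "degree p" arbitrary: p rule: less_induct)
  case less
  show ?case
  proof (cases "\<exists>a\<in>S. poly p a = 0")
    case False
    then have e: "{x\<in>S. poly p x = 0} = {}" by auto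
    show ?thesis unfolding e by simp
  next
    case True
    then obtain a where a: "a \<in> S" "poly p a = 0" by blast
    then obtain q where q: "p = [:-a,1:] * q" using poly_eq_0_iff_dvd by (metis dvdE)
    have q0: "q \<noteq> 0" using less.prems q by auto
    have dp: "degree p = degree q + 1"
      using degree_mult_unit_lead[of "[:-a,1:]" q] q0 q by (simp add: units_def)
    have sub: "{x\<in>S. poly p x = 0} \<subseteq> insert a {x\<in>S. poly q x = 0}"
    proof
      fix b assume b: "b \<in> {x\<in>S. poly p x = 0}"
      show "b \<in> insert a {x\<in>S. poly q x = 0}"
      proof (cases "b = a")
        case False
        have "b - a \<in> units" using assms(2) b a False unfolding pw_def by auto
        moreover have "(b - a) * poly q b = 0" using b q by (simp add: algebra_simps)
        ultimately show ?thesis using unit_mult_zero b by blast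
      qed simp
    qed
    have "card {x\<in>S. poly p x = 0} \<le> card (insert a {x\<in>S. poly q x = 0})"
      by (rule card_mono) (use assms(1) sub in auto)
    also have "\<dots> \<le> Suc (card {x\<in>S. poly q x = 0})" by (simp add: card_insert_if assms(1))
    also have "\<dots> \<le> Suc (degree q)" using less.hyps[of q] dp q0 by simp
    finally show ?thesis using dp by simp
  qed
qed

lemma chain_nonunit_diff:
  fixes x y :: "'a::comm_ring_1"
  assumes "chain_ring TYPE('a)" "x \<notin> units" "y \<notin> units"
  shows "x - y \<notin> units"
proof -
  have id: "is_ideal (range (\<lambda>c. z * c))" for z :: 'a
    unfolding is_ideal_def
  proof (intro conjI ballI allI impI)
    show "0 \<in> range (\<lambda>c. z * c)" by (rule range_eqI[of _ _ 0]) simp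
  next
    fix u v assume "u \<in> range (\<lambda>c. z * c)" "v \<in> range (\<lambda>c. z * c)"
    then obtain c1 c2 where "u = z * c1" "v = z * c2" by blast
    then show "u + v \<in> range (\<lambda>c. z * c)" by (intro range_eqI[of _ _ "c1 + c2"]) (simp add: distrib_left)
  next
    fix c u assume "u \<in> range (\<lambda>c. z * c)"
    then obtain c1 where "u = z * c1" by blast
    then show "c * u \<in> range (\<lambda>c. z * c)" by (intro range_eqI[of _ _ "c * c1"]) (simp add: mult_ac)
  qed
  have "range (\<lambda>c. x * c) \<subseteq> range (\<lambda>c. y * c) \<or> range (\<lambda>c. y * c) \<subseteq> range (\<lambda>c. x * c)"
    using assms(1) id unfolding chain_ring_def by blast
  then show ?thesis
  proof
    assume "range (\<lambda>c. x * c) \<subseteq> range (\<lambda>c. y * c)"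
    then obtain c where c: "x * 1 = y * c" by blast
    have "x - y = y * (c - 1)" using c by (simp add: algebra_simps)
    then show ?thesis using assms(3) unfolding units_def by (metis dvd_mult_left mem_Collect_eq dvd_trans)
  next
    assume "range (\<lambda>c. y * c) \<subseteq> range (\<lambda>c. x * c)"
    then obtain c where c: "y * 1 = x * c" by blast
    have "x - y = x * (1 - c)" using c by (simp add: algebra_simps)
    then show ?thesis using assms(2) unfolding units_def by (metis dvd_mult_left mem_Collect_eq dvd_trans)
  qed
qed

lemma units_minus: "(x::'a::comm_ring_1) - y \<in> units \<longleftrightarrow> y - x \<in> units"
proof -
  have "y - x = - (x - y)" by simp
  then show ?thesis unfolding units_def by (simp only: mem_Collect_eq minus_dvd_iff)
qed

lemma wc_pw:
  fixes A :: "'a::comm_ring_1 set"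
  assumes "chain_ring TYPE('a)" "well_conditioned A"
  shows "pw A"
  using assms(2) unfolding well_conditioned_def
proof
  assume "subtractive A" then show ?thesis unfolding subtractive_def pw_def by blast
next
  assume "\<exists>a\<in>A. subtractive (A - {a}) \<and> zero_divisor_or_zero a"
  then obtain a where a: "a \<in> A" "subtractive (A - {a})" "zero_divisor_or_zero a" by blast
  have key: "a - y \<in> units" if y: "y \<in> A" "y \<noteq> a" for y
  proof -
    have yu: "y \<in> units" using a(2) y unfolding subtractive_def by blast
    have au: "a \<notin> units"
    proof
      assume au: "a \<in> units"
      from a(3) show False unfolding zero_divisor_or_zero_def
      proof
        assume "a = 0"
        with au have "(1::'a) = 0" unfolding units_def by simp
        then have "\<forall>z::'a. z = 0" by (metis mult_1 mult_zero_left)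
        with y show False by metis
      next
        assume "\<exists>b. b \<noteq> 0 \<and> a * b = 0"
        with au unit_mult_zero show False by blast
      qed
    qed
    show ?thesis
    proof (rule ccontr)
      assume "a - y \<notin> units"
      then have "a - (a - y) \<notin> units" using chain_nonunit_diff[OF assms(1) au] by blast
      with yu show False by simp
    qed
  qed
  show ?thesis unfolding pw_def
  proof (intro ballI impI)
    fix x y assume xy: "x \<in> A" "y \<in> A" "x \<noteq> y"
    show "x - y \<in> units"
    proof (cases "x = a")
      case True then show ?thesis using key xy by auto
    next
      case False
      show ?thesis
      proof (cases "y = a")
        case True then show ?thesis using key[of x] xy False units_minus by blast
      next
        case False
        then show ?thesis using a(2) xy \<open>x \<noteq> a\<close> unfolding subtractive_def by blast
      qed
    qed
  qed
qed


definition P :: "nat \<Rightarrow> (nat \<Rightarrow> 'a::comm_ring_1) \<Rightarrow> 'a poly" where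
  "P r b = (\<Sum>i<r. monom (b i) i)"

definition Fp :: "nat \<Rightarrow> nat \<Rightarrow> 'a::comm_ring_1 poly \<Rightarrow> (nat \<Rightarrow> nat \<Rightarrow> 'a) \<Rightarrow> 'a poly" where
  "Fp r t g a = (\<Sum>j<t. g ^ j * P r (\<lambda>i. a i j))"

lemma poly_P: "poly (P r b) x = (\<Sum>i<r. b i * x ^ i)"
  by (simp add: P_def poly_sum poly_monom)

lemma degree_P: "degree (P r b) \<le> r - 1"
  unfolding P_def by (rule degree_sum_le) (auto intro: order.trans[OF degree_monom_le])

lemma coeff_P: "i < r \<Longrightarrow> coeff (P r b) i = b i"
  by (simp add: P_def coeff_sum)

lemma poly_Fp: "poly (Fp r t g a) x = f_msg r t g a x"
proof -
  have "poly (Fp r t g a) x = (\<Sum>j<t. \<Sum>i<r. a i j * poly g x ^ j * x ^ i)"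
    by (simp add: Fp_def poly_sum poly_P sum_distrib_left mult_ac)
  also have "\<dots> = f_msg r t g a x" unfolding f_msg_def by (rule sum.swap)
  finally show ?thesis .
qed

lemma P_diff: "P r b - P r b' = P r (\<lambda>i. b i - b' i)"
  by (simp add: P_def sum_subtractf[symmetric] diff_monom)

lemma Fp_diff: "Fp r t g a - Fp r t g b = Fp r t g (\<lambda>i j. a i j - b i j)"
  by (simp add: Fp_def sum_subtractf[symmetric] right_diff_distrib[symmetric] P_diff)

lemma degree_Fp:
  assumes "t \<ge> 1"
  shows "degree (Fp r t g a) \<le> (t - 1) * degree g + (r - 1)"
  unfolding Fp_def
proof (rule degree_sum_le)
  fix j assume j: "j \<in> {..<t}"
  have "degree (g ^ j * P r (\<lambda>i. a i j)) \<le> degree (g ^ j) + degree (P r (\<lambda>i. a i j))"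
    by (rule degree_mult_le)
  also have "\<dots> \<le> degree g * j + (r - 1)"
    using degree_power_le[of g j] degree_P[of r] by (intro add_mono) auto
  also have "\<dots> \<le> (t - 1) * degree g + (r - 1)"
  proof -
    have "j \<le> t - 1" using j by auto
    then show ?thesis by (simp add: mult.commute mult_le_mono2)
  qed
  finally show "degree (g ^ j * P r (\<lambda>i. a i j)) \<le> (t - 1) * degree g + (r - 1)" .
qed simp

lemma Fp_zero:
  fixes g :: "'a::comm_ring_1 poly"
  assumes "lead_coeff g \<in> units" "r < degree g" "Fp r t g a = 0"
  shows "\<forall>i<r. \<forall>j<t. a i j = 0"
  using assms(3)
proof (induction t arbitrary: a)
  case 0 thus ?case by simp
next
  case (Suc t)
  have eq: "Fp r (Suc t) g a = P r (\<lambda>i. a i 0) + g * Fp r t g (\<lambda>i j. a i (Suc j))"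
    unfolding Fp_def sum.lessThan_Suc_shift by (simp add: sum_distrib_left mult.assoc del: sum.lessThan_Suc)
  have H: "Fp r t g (\<lambda>i j. a i (Suc j)) = 0"
  proof (rule ccontr)
    assume H0: "Fp r t g (\<lambda>i j. a i (Suc j)) \<noteq> 0"
    have d1: "degree (g * Fp r t g (\<lambda>i j. a i (Suc j))) \<ge> degree g"
      using degree_mult_unit_lead[OF assms(1) H0] by simp
    have d2: "degree (P r (\<lambda>i. a i 0)) < degree g" using degree_P[of r "\<lambda>i. a i 0"] assms(2) by linarith
    have "degree (Fp r (Suc t) g a) = degree (g * Fp r t g (\<lambda>i j. a i (Suc j)))"
      unfolding eq using d1 d2 by (intro degree_add_eq_right) simp
    with Suc.prems d1 assms(2) show False by simp
  qed
  have P0: "P r (\<lambda>i. a i 0) = 0" using Suc.prems eq H by simp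
  have IH: "\<forall>i<r. \<forall>j<t. a i (Suc j) = 0" using Suc.IH[OF H] .
  show ?case
  proof (intro allI impI)
    fix i j assume ij: "i < r" "j < Suc t"
    show "a i j = 0"
    proof (cases j)
      case 0 then show ?thesis using coeff_P[OF ij(1), of "\<lambda>i. a i 0"] P0 by simp
    next
      case (Suc j') then show ?thesis using IH ij by auto
    qed
  qed
qed

lemma f_msg_block:
  assumes "poly g x = c"
  shows "f_msg r t g a x = poly (P r (\<lambda>i. \<Sum>j<t. a i j * c ^ j)) x"
  unfolding poly_P f_msg_def using assms by (simp add: sum_distrib_right sum_distrib_left mult_ac)

lemma sum_divmod:
  fixes h :: "nat \<Rightarrow> nat \<Rightarrow> 'b::comm_monoid_add"
  assumes "r > 0"
  shows "(\<Sum>k<r*t. h (k mod r) (k div r)) = (\<Sum>i<r. \<Sum>j<t. h i j)"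
proof -
  have "(\<Sum>k<r*t. h (k mod r) (k div r)) = (\<Sum>(i,j)\<in>{..<r}\<times>{..<t}. h i j)"
  proof (rule sum.reindex_bij_witness[of _ "\<lambda>(i,j). i + r*j" "\<lambda>k. (k mod r, k div r)"])
    fix k assume k: "k \<in> {..<r*t}"
    show "(\<lambda>(i,j). i + r*j) (k mod r, k div r) = k" by simp
    show "(k mod r, k div r) \<in> {..<r}\<times>{..<t}" using k assms
      by (auto intro: less_mult_imp_div_less simp: mult.commute)
    show "(case (k mod r, k div r) of (i, j) \<Rightarrow> h i j) = h (k mod r) (k div r)" by simp
  next
    fix b assume b: "b \<in> {..<r}\<times>{..<t}"
    obtain i j where ij: "b = (i,j)" "i < r" "j < t" using b by auto
    show "(\<lambda>k. (k mod r, k div r)) ((\<lambda>(i,j). i + r*j) b) = b" using ij by simp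
    have "i + r*j < r + r*j" using ij by simp
    also have "\<dots> = r * (Suc j)" by simp
    also have "\<dots> \<le> r * t" using ij by (intro mult_le_mono2) simp
    finally show "(\<lambda>(i,j). i + r*j) b \<in> {..<r*t}" using ij by simp
  qed
  also have "\<dots> = (\<Sum>i<r. \<Sum>j<t. h i j)" by (rule sum.cartesian_product[symmetric])
  finally show ?thesis .
qed


definition cw :: "'a set \<Rightarrow> nat \<Rightarrow> nat \<Rightarrow> 'a::comm_ring_1 poly \<Rightarrow> (nat \<Rightarrow> nat \<Rightarrow> 'a) \<Rightarrow> 'a \<Rightarrow> 'a" where
  "cw A r t g a = (\<lambda>x. if x \<in> A then f_msg r t g a x else 0)"

lemma f_msg_t0: "f_msg r 0 g a x = 0"
  by (simp add: f_msg_def)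

lemma code_eq: "code A r t g = range (cw A r t g)"
  by (auto simp: code_def cw_def)

lemma code_iff: "c \<in> code A r t g \<longleftrightarrow> (\<exists>a. c = cw A r t g a)"
  by (auto simp: code_def cw_def)

lemma dist_bound:
  fixes S :: "'a::comm_ring_1 set"
  assumes "finite S" "pw S" "\<forall>x\<in>S. c x - c' x = poly Q x" "\<exists>x\<in>S. c x \<noteq> c' x"
  shows "card S - degree Q \<le> hdist_on S c c'"
proof -
  have Q0: "Q \<noteq> 0"
  proof
    assume "Q = 0"
    obtain x where "x \<in> S" "c x \<noteq> c' x" using assms(4) by blast
    with assms(3) \<open>Q = 0\<close> show False by simp
  qed
  have e: "{x\<in>S. c x \<noteq> c' x} = S - {x\<in>S. poly Q x = 0}"
  proof (rule set_eqI)
    fix x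
    show "x \<in> {x\<in>S. c x \<noteq> c' x} \<longleftrightarrow> x \<in> S - {x\<in>S. poly Q x = 0}"
      using assms(3) by (metis (mono_tags, lifting) DiffE DiffI mem_Collect_eq right_minus_eq)
  qed
  have "card {x\<in>S. c x \<noteq> c' x} = card S - card {x\<in>S. poly Q x = 0}"
    unfolding e using assms(1) by (intro card_Diff_subset) auto
  moreover have "card {x\<in>S. poly Q x = 0} \<le> degree Q" by (rule root_bound[OF assms(1,2) Q0])
  ultimately show ?thesis unfolding hdist_on_def by simp
qed

theorem mainTheorem12:
  fixes A :: "'a::comm_ring_1 set"
    and Ablk :: "nat \<Rightarrow> 'a set"
    and g :: "'a poly"
    and r \<rho> l K t :: nat
  assumes chain: "chain_ring TYPE('a)"
    and r: "r \<ge> 1" and rho: "\<rho> \<ge> 2"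
    and A_union: "A = (\<Union>i<l. Ablk i)"
    and disj: "\<forall>i<l. \<forall>j<l. i \<noteq> j \<longrightarrow> Ablk i \<inter> Ablk j = {}"
    and blk_card: "\<forall>i<l. card (Ablk i) = r + \<rho> - 1"
    and wc: "well_conditioned A"
    and g_deg: "degree g = r + \<rho> - 1"
    and g_lead: "lead_coeff g \<in> units"
    and g_const: "\<forall>i<l. \<forall>x\<in>Ablk i. \<forall>y\<in>Ablk i. poly g x = poly g y"
    and K: "K = r * t" and t: "t \<le> l"
  shows "linear_code A (code A r t g) \<and> free_rank (code A r t g) K
    \<and> (\<forall>i<l. min_dist_ge (code A r t g) (Ablk i) (int \<rho>))
    \<and> has_locality (code A r t g) A r \<rho> l Ablk
    \<and> min_dist_ge (code A r t g) A
         (int (card A) - int K + 1 - (int K div int r - 1) * (int \<rho> - 1))"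
proof -
  define D where "D = r + \<rho> - 1"
  have finU: "finite (UNIV::'a set)" using chain unfolding chain_ring_def by (rule conjunct1)
  have finS: "finite (S::'a set)" for S by (rule finite_subset[OF subset_UNIV finU])
  have pwA: "pw A" by (rule wc_pw[OF chain wc])
  have pw_sub: "pw S" if "S \<subseteq> A" for S using pwA that unfolding pw_def by blast
  have blk_sub: "Ablk i \<subseteq> A" if "i < l" for i using A_union that by auto
  have cardA: "card A = l * D"
  proof -
    have "card A = (\<Sum>i<l. card (Ablk i))" unfolding A_union
      by (rule card_UN_disjoint) (use disj finS in auto)
    also have "\<dots> = l * D" using blk_card D_def by simp
    finally show ?thesis .
  qed
  have rpos: "r > 0" using r by simp
  have rdeg: "r < degree g" using g_deg rho by simp
  have dgD: "degree g = D" using g_deg D_def by simp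
  have inj: "\<forall>i<r. \<forall>j<t. a i j = b i j" if eq: "\<forall>x\<in>A. f_msg r t g a x = f_msg r t g b x" for a b
  proof (cases "t = 0")
    case True thus ?thesis by simp
  next
    case False
    define Q where "Q = Fp r t g a - Fp r t g b"
    have QF: "Q = Fp r t g (\<lambda>i j. a i j - b i j)" by (simp add: Q_def Fp_diff)
    have degQ: "degree Q \<le> (t-1)*D + (r-1)" unfolding Q_def dgD[symmetric]
      using degree_Fp[of t r g] False by (intro degree_diff_le) auto
    have "Q = 0"
    proof (rule ccontr)
      assume Q0: "Q \<noteq> 0"
      have "card {x\<in>A. poly Q x = 0} \<le> degree Q" by (rule root_bound[OF finS pwA Q0])
      moreover have "{x\<in>A. poly Q x = 0} = A" using eq by (auto simp: Q_def poly_Fp)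
      ultimately have "l*D \<le> (t-1)*D + (r-1)" using cardA degQ by simp
      moreover have "t*D \<le> l*D" using t by (rule mult_le_mono1)
      moreover have "(t-1)*D + (r-1) < t*D"
      proof -
        obtain t' where "t = Suc t'" using False by (cases t) auto
        then show ?thesis using D_def rho by simp
      qed
      ultimately show False by linarith
    qed
    then have "Fp r t g (\<lambda>i j. a i j - b i j) = 0" using QF by simp
    then have "\<forall>i<r. \<forall>j<t. (\<lambda>i j. a i j - b i j) i j = 0" by (rule Fp_zero[OF g_lead rdeg])
    then show ?thesis by simp
  qed
  have lin: "linear_code A (code A r t g)"
    unfolding linear_code_def code_eq
  proof (intro conjI ballI allI impI)
    show "(\<lambda>_. 0) \<in> range (cw A r t g)"
      by (rule range_eqI[of _ _ "\<lambda>i j. 0"]) (simp add: cw_def f_msg_def fun_eq_iff)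
  next
    fix c x assume "c \<in> range (cw A r t g)" "x \<notin> A"
    then show "c x = 0" by (auto simp: cw_def)
  next
    fix c c' assume "c \<in> range (cw A r t g)" "c' \<in> range (cw A r t g)"
    then obtain a a' where "c = cw A r t g a" "c' = cw A r t g a'" by auto
    then show "(\<lambda>x. c x + c' x) \<in> range (cw A r t g)"
      by (intro range_eqI[of _ _ "\<lambda>i j. a i j + a' i j"])
         (simp add: cw_def f_msg_def sum.distrib distrib_right fun_eq_iff)
  next
    fix k c assume "c \<in> range (cw A r t g)"
    then obtain a where "c = cw A r t g a" by auto
    then show "(\<lambda>x. k * c x) \<in> range (cw A r t g)"
      by (intro range_eqI[of _ _ "\<lambda>i j. k * a i j"])
         (simp add: cw_def f_msg_def sum_distrib_left mult_ac fun_eq_iff)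
  qed
  have idx_lt: "i + r*j < r*t" if "i < r" "j < t" for i j
  proof -
    have "i + r*j < r + r*j" using that by simp
    also have "\<dots> = r * (Suc j)" by simp
    also have "\<dots> \<le> r * t" using that by (intro mult_le_mono2) simp
    finally show ?thesis .
  qed
  have kdiv: "k mod r < r \<and> k div r < t" if "k < K" for k
    using that rpos K by (auto intro: less_mult_imp_div_less simp: mult.commute)
  define bas where "bas = (\<lambda>k. \<lambda>x. if x \<in> A then (poly g x)^(k div r) * x^(k mod r) else (0::'a))"
  have rep: "(\<lambda>x. \<Sum>k<K. cf k * bas k x) = cw A r t g (\<lambda>i j. cf (i + r*j))" for cf
  proof
    fix x
    show "(\<Sum>k<K. cf k * bas k x) = cw A r t g (\<lambda>i j. cf (i + r*j)) x"
    proof (cases "x \<in> A")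
      case False thus ?thesis by (simp add: bas_def cw_def)
    next
      case True
      have "(\<Sum>k<K. cf k * bas k x) = (\<Sum>k<r*t. (\<lambda>i j. cf (i + r*j) * poly g x ^ j * x ^ i) (k mod r) (k div r))"
        using True by (simp add: bas_def K mult.assoc mod_mult_div_eq)
      also have "\<dots> = f_msg r t g (\<lambda>i j. cf (i + r*j)) x" unfolding f_msg_def
        by (subst sum_divmod[OF rpos, symmetric]) (simp add: mod_mult_div_eq)
      finally show ?thesis using True by (simp add: cw_def)
    qed
  qed
  have fr: "free_rank (code A r t g) K"
    unfolding free_rank_def
  proof (intro exI[of _ bas] conjI allI impI ballI)
    fix k assume k: "k < K"
    have "bas k = (\<lambda>x. \<Sum>k'<K. (if k' = k then 1 else 0) * bas k' x)"
    proof
      fix x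
      have "(\<Sum>k'<K. (if k' = k then 1 else 0) * bas k' x) = (\<Sum>k'<K. if k' = k then bas k' x else 0)"
        by (rule sum.cong) auto
      also have "\<dots> = bas k x" using k by (simp add: sum.delta)
      finally show "bas k x = (\<Sum>k'<K. (if k' = k then 1 else 0) * bas k' x)" by simp
    qed
    also have "\<dots> = cw A r t g (\<lambda>i j. (if i + r*j = k then 1 else 0))" by (rule rep)
    finally show "bas k \<in> code A r t g" unfolding code_iff by blast
  next
    fix c assume "c \<in> code A r t g"
    then obtain a where a: "c = cw A r t g a" unfolding code_iff by blast
    define cf where "cf = (\<lambda>k. if k < K then a (k mod r) (k div r) else 0)"
    show "\<exists>!cf. (\<forall>i\<ge>K. cf i = 0) \<and> c = (\<lambda>x. \<Sum>i<K. cf i * bas i x)"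
    proof (rule ex_ex1I)
      have fe: "f_msg r t g (\<lambda>i j. cf (i + r*j)) x = f_msg r t g a x" for x
        unfolding f_msg_def
      proof (intro sum.cong refl)
        fix i j assume ij: "i \<in> {..<r}" "j \<in> {..<t}"
        then have "i + r*j < K" using idx_lt K by simp
        then show "cf (i + r * j) * poly g x ^ j * x ^ i = a i j * poly g x ^ j * x ^ i"
          using ij by (simp add: cf_def)
      qed
      have "cw A r t g (\<lambda>i j. cf (i + r*j)) = cw A r t g a"
        unfolding cw_def fe by (rule refl)
      then show "\<exists>cf. (\<forall>i\<ge>K. cf i = 0) \<and> c = (\<lambda>x. \<Sum>i<K. cf i * bas i x)"
        using a rep[of cf] by (intro exI[of _ cf]) (simp add: cf_def)
    next
      fix cf1 cf2
      assume h1: "(\<forall>i\<ge>K. cf1 i = 0) \<and> c = (\<lambda>x. \<Sum>i<K. cf1 i * bas i x)"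
        and h2: "(\<forall>i\<ge>K. cf2 i = 0) \<and> c = (\<lambda>x. \<Sum>i<K. cf2 i * bas i x)"
      have "cw A r t g (\<lambda>i j. cf1 (i + r*j)) = cw A r t g (\<lambda>i j. cf2 (i + r*j))"
        using h1 h2 by (simp only: rep[symmetric])
      then have "\<forall>x\<in>A. f_msg r t g (\<lambda>i j. cf1 (i + r*j)) x = f_msg r t g (\<lambda>i j. cf2 (i + r*j)) x"
      proof (intro ballI)
        fix x assume x: "x \<in> A"
        assume "cw A r t g (\<lambda>i j. cf1 (i + r*j)) = cw A r t g (\<lambda>i j. cf2 (i + r*j))"
        from fun_cong[OF this, of x] show "f_msg r t g (\<lambda>i j. cf1 (i + r*j)) x = f_msg r t g (\<lambda>i j. cf2 (i + r*j)) x"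
          using x by (simp add: cw_def)
      qed
      then have E: "\<forall>i<r. \<forall>j<t. cf1 (i + r*j) = cf2 (i + r*j)" by (rule inj)
      show "cf1 = cf2"
      proof
        fix k
        show "cf1 k = cf2 k"
        proof (cases "k < K")
          case True
          then have "cf1 (k mod r + r*(k div r)) = cf2 (k mod r + r*(k div r))" using E kdiv by blast
          then show ?thesis by (simp add: mod_mult_div_eq)
        next
          case False then show ?thesis using h1 h2 by simp
        qed
      qed
    qed
  qed
  have blk: "\<forall>i<l. min_dist_ge (code A r t g) (Ablk i) (int \<rho>)"
    unfolding min_dist_ge_def
  proof (intro allI impI ballI)
    fix i c c' assume i: "i < l" and c: "c \<in> code A r t g" and c': "c' \<in> code A r t g"
      and ex: "\<exists>x\<in>Ablk i. c x \<noteq> c' x"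
    obtain a b where ab: "c = cw A r t g a" "c' = cw A r t g b" using c c' unfolding code_iff by blast
    obtain y0 where y0: "y0 \<in> Ablk i" using ex by blast
    define cst where "cst = poly g y0"
    define Q where "Q = P r (\<lambda>k. \<Sum>j<t. a k j * cst ^ j) - P r (\<lambda>k. \<Sum>j<t. b k j * cst ^ j)"
    have Qeq: "\<forall>z\<in>Ablk i. c z - c' z = poly Q z"
    proof
      fix z assume z: "z \<in> Ablk i"
      have zA: "z \<in> A" using z blk_sub i by blast
      have gz: "poly g z = cst" using g_const i z y0 cst_def by blast
      show "c z - c' z = poly Q z"
        using zA by (simp add: ab cw_def Q_def f_msg_block[OF gz])
    qed
    have dQ: "degree Q \<le> r - 1" unfolding Q_def by (intro degree_diff_le degree_P)
    have "card (Ablk i) - degree Q \<le> hdist_on (Ablk i) c c'"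
      by (rule dist_bound[OF finS pw_sub[OF blk_sub[OF i]] Qeq ex])
    moreover have "card (Ablk i) = r + \<rho> - 1" using blk_card i by simp
    ultimately show "int \<rho> \<le> int (hdist_on (Ablk i) c c')" using dQ r rho by linarith
  qed
  have glob: "min_dist_ge (code A r t g) A
         (int (card A) - int K + 1 - (int K div int r - 1) * (int \<rho> - 1))"
    unfolding min_dist_ge_def
  proof (intro allI impI ballI)
    fix c c' assume c: "c \<in> code A r t g" and c': "c' \<in> code A r t g"
      and ex: "\<exists>x\<in>A. c x \<noteq> c' x"
    obtain a b where ab: "c = cw A r t g a" "c' = cw A r t g b" using c c' unfolding code_iff by blast
    have t1: "t \<noteq> 0"
    proof
      assume "t = 0"
      then have "c = c'" unfolding ab cw_def by (intro ext) (simp add: f_msg_t0)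
      with ex show False by blast
    qed
    define Q where "Q = Fp r t g a - Fp r t g b"
    have Qeq: "\<forall>z\<in>A. c z - c' z = poly Q z" by (simp add: ab cw_def Q_def poly_Fp)
    have degQ: "degree Q \<le> (t-1)*D + (r-1)" unfolding Q_def dgD[symmetric]
      using degree_Fp[of t r g] t1 by (intro degree_diff_le) auto
    have hd: "card A - degree Q \<le> hdist_on A c c'" by (rule dist_bound[OF finS pwA Qeq ex])
    have "t*D \<le> l*D" using t by (rule mult_le_mono1)
    moreover have "(t-1)*D + (r-1) < t*D"
    proof -
      obtain t' where "t = Suc t'" using t1 by (cases t) auto
      then show ?thesis using D_def rho by simp
    qed
    ultimately have lt: "degree Q < card A" using cardA degQ by linarith
    have divt: "int K div int r = int t" using rpos K by simp
    have ar: "int ((t-1)*D + (r-1)) = int K - 1 + (int t - 1) * (int \<rho> - 1)"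
    proof -
      obtain t' where t': "t = Suc t'" using t1 by (cases t) auto
      obtain r' where r': "r = Suc r'" using rpos by (cases r) auto
      obtain p' where p': "\<rho> = Suc (Suc p')" using rho by (metis add_2_eq_Suc le_Suc_ex)
      show ?thesis by (simp add: t' r' p' K D_def algebra_simps)
    qed
    have "int (card A) - int (degree Q) \<le> int (hdist_on A c c')" using hd lt by linarith
    moreover have "int (degree Q) \<le> int ((t-1)*D + (r-1))" using degQ by linarith
    ultimately show "int (card A) - int K + 1 - (int K div int r - 1) * (int \<rho> - 1) \<le> int (hdist_on A c c')"
      unfolding divt using ar by linarith
  qed
  have loc: "has_locality (code A r t g) A r \<rho> l Ablk"
    unfolding has_locality_def using A_union disj blk_card blk by simp
  show ?thesis using lin fr blk loc glob by blast
qed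

end
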